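(* Let $E$ be a finite-dimensional real Euclidean space with translation space $V$ and let $\Phi_{\mathrm{aff}}$ be an affine root system on $E$. Let $J'\subset\Phi_{\mathrm{aff}}$ be such that $DJ'=\{Da\mid a\in J'\}$ is linearly independent (not assumed to lie in a basis of $\Phi_{\mathrm{aff}}$). Suppose there exists a basis $B_{J'}$ of the affine root system $(\Phi_{\mathrm{aff}})_{J'}$ on $E_{J'}$ containing $J'$. Then there exists a basis $B'$ of $\Phi_{\mathrm{aff}}$ containing $J'$.
   Context: Affine root systems are in the sense of Macdonald. For an affine root $a$, $Da\in V^*$ is its gradient: $a(x+v)=a(x)+(Da)(v)$. Set $V^{J'}=\{v\in V\mid\alpha(v)=0\ \forall\alpha\in DJ'\}$, $E_{J'}=E/V^{J'}$ with the Euclidean structure transported from $(V^{J'})^\perp\cong V/V^{J'}$, and $(\Phi_{\mathrm{aff}})_{J'}=\{a\in\Phi_{\mathrm{aff}}\mid Da\in\mathbb R\cdot DJ'\}$, viewed as an affine root system on $E_{J'}$. *)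

theory Defs
  imports "HOL-Analysis.Analysis"
begin

text \<open>The Euclidean affine space E is modelled by a Euclidean
vector space type 'v (after choosing an origin), which is also its translation
space V.  Dual vectors are identified with vectors via the inner product.
An affine function on a linear subspace W of 'v is represented by a pair
(u, c) with u in W, standing for x \<mapsto> u \<bullet> x + c; its gradient is u.\<close>

type_synonym 'v afun = "'v \<times> real"

definition aff :: "'v::euclidean_space afun \<Rightarrow> 'v \<Rightarrow> real" where
  "aff a x = fst a \<bullet> x + snd a"

definition grad :: "'v::euclidean_space afun \<Rightarrow> 'v" where
  "grad a = fst a"

definition aff_funs :: "'v::euclidean_space set \<Rightarrow> 'v afun set" where
  "aff_funs W = {a. grad a \<in> W}"

definition hyp :: "'v::euclidean_space set \<Rightarrow> 'v afun \<Rightarrow> 'v set" where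
  "hyp W a = {x \<in> W. aff a x = 0}"

text \<open>Orthogonal reflection of W in the hyperplane of a:
  s_a(x) = x - a(x) Da^vee, with Da^vee = 2 Da / |Da|^2.\<close>
definition refl_pt :: "'v::euclidean_space afun \<Rightarrow> 'v \<Rightarrow> 'v" where
  "refl_pt a x = x - (aff a x * (2 / (grad a \<bullet> grad a))) *\<^sub>R grad a"

inductive_set weyl_group :: "'v::euclidean_space afun set \<Rightarrow> ('v \<Rightarrow> 'v) set"
  for S where
  weyl_id: "id \<in> weyl_group S"
| weyl_step: "w \<in> weyl_group S \<Longrightarrow> a \<in> S \<Longrightarrow> refl_pt a \<circ> w \<in> weyl_group S"

text \<open>Affine root system on the Euclidean (affine) space W in the sense of
Macdonald: (AR1) S spans F and consists of non-constant functions;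
(AR2) s_a(S) = S; (AR3) <a^vee, b> integral; (AR4) the Weyl group acts
properly on W.  The action of s_a on functions is b \<mapsto> b \<circ> s_a.\<close>
definition affine_root_system :: "'v::euclidean_space set \<Rightarrow> 'v afun set \<Rightarrow> bool" where
  "affine_root_system W S \<longleftrightarrow>
     subspace W \<and>
     S \<subseteq> aff_funs W \<and>
     span S = aff_funs W \<and>
     (\<forall>a\<in>S. grad a \<noteq> 0) \<and>
     (\<forall>a\<in>S. \<forall>b\<in>S. \<exists>b'\<in>S. \<forall>x\<in>W. aff b' x = aff b (refl_pt a x)) \<and>
     (\<forall>a\<in>S. \<forall>b\<in>S. 2 * (grad a \<bullet> grad b) / (grad a \<bullet> grad a) \<in> \<int>) \<and>
     (\<forall>K. compact K \<and> K \<subseteq> W \<longrightarrow>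
        finite {w \<in> weyl_group S. w ` K \<inter> K \<noteq> {}})"

definition alcoves :: "'v::euclidean_space set \<Rightarrow> 'v afun set \<Rightarrow> 'v set set" where
  "alcoves W S = components (W - (\<Union>a\<in>S. hyp W a))"

definition is_wall :: "'v::euclidean_space set \<Rightarrow> 'v afun \<Rightarrow> 'v set \<Rightarrow> bool" where
  "is_wall W a C \<longleftrightarrow> affine hull (hyp W a \<inter> closure C) = hyp W a"

definition basis_of_alcove :: "'v::euclidean_space set \<Rightarrow> 'v afun set \<Rightarrow> 'v set \<Rightarrow> 'v afun set" where
  "basis_of_alcove W S C =
     {a \<in> S. (1/2) *\<^sub>R a \<notin> S \<and> is_wall W a C \<and> (\<forall>x\<in>C. aff a x > 0)}"

definition is_basis :: "'v::euclidean_space set \<Rightarrow> 'v afun set \<Rightarrow> 'v afun set \<Rightarrow> bool" where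
  "is_basis W S B \<longleftrightarrow> (\<exists>C \<in> alcoves W S. B = basis_of_alcove W S C)"

text \<open>For J' with linearly independent gradients: E_{J'} = E / V^{J'} is
identified isometrically with (V^{J'})^\<bottom> = span DJ' (orthogonal projection),
and (Phi_aff)_{J'} consists of the roots with gradient in span DJ'; these are
constant along V^{J'} and are represented by the same pairs.\<close>
definition sub_space :: "'v::euclidean_space afun set \<Rightarrow> 'v set" where
  "sub_space J = span (grad ` J)"

definition sub_system :: "'v::euclidean_space afun set \<Rightarrow> 'v afun set \<Rightarrow> 'v afun set" where
  "sub_system Phi J = {a \<in> Phi. grad a \<in> span (grad ` J)}"

end

theory Submission
  imports Defs
begin


lemma aff_eq: "aff a x = fst a \<bullet> x + snd a" by (simp add: aff_def)

lemma aff_refl: "aff b (refl_pt a x) = aff b x - aff a x * (2 * (fst a \<bullet> fst b) / (fst a \<bullet> fst a))"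
  by (simp add: refl_pt_def aff_def grad_def inner_diff_right inner_commute algebra_simps)

lemma affs_eq_imp:
  assumes "\<And>x. aff p x = u \<bullet> x + c"
  shows "fst p = u \<and> snd p = c"
proof -
  have c: "snd p = c" using assms[of 0] by (simp add: aff_def)
  have "aff p (fst p - u) = u \<bullet> (fst p - u) + c" by (rule assms)
  hence "(fst p - u) \<bullet> (fst p - u) = 0" using c by (simp add: aff_def inner_diff_left inner_diff_right inner_commute)
  thus ?thesis using c by simp
qed

lemma hyp_sub_prop:
  fixes a b :: "'v::euclidean_space afun"
  assumes W: "subspace W" and aW: "fst a \<in> W" and bW: "fst b \<in> W" and a0: "fst a \<noteq> 0"
    and sub: "\<And>x. x \<in> W \<Longrightarrow> aff a x = 0 \<Longrightarrow> aff b x = 0"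
  shows "\<exists>l. \<forall>x\<in>W. aff b x = l * aff a x"
proof -
  define g where "g = fst a"
  define n where "n = g \<bullet> g"
  have n0: "n > 0" using a0 by (simp add: n_def g_def)
  define p0 where "p0 = (- snd a / n) *\<^sub>R g"
  have p0W: "p0 \<in> W" using W aW by (simp add: p0_def g_def subspace_scale subspace_neg)
  have ap0: "aff a p0 = 0" using n0 by (simp add: p0_def aff_def g_def n_def)
  hence bp0: "aff b p0 = 0" using sub p0W by blast
  show ?thesis
  proof (intro exI ballI)
    fix x assume xW: "x \<in> W"
    define v where "v = x - p0 - (aff a x / n) *\<^sub>R g"
    have vW: "v \<in> W" unfolding v_def using W xW p0W aW g_def
      by (simp add: subspace_diff subspace_scale)
    have "g \<bullet> v = 0" using n0 ap0 unfolding v_def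
      by (simp add: inner_diff_right aff_def g_def n_def)
    hence "aff a (p0 + v) = 0" using ap0 by (simp add: aff_def g_def inner_add_right)
    hence "aff b (p0 + v) = 0" using sub W p0W vW subspace_add by blast
    hence bv: "fst b \<bullet> v = 0" using bp0 by (simp add: aff_def inner_add_right)
    have "x = p0 + v + (aff a x / n) *\<^sub>R g" by (simp add: v_def)
    hence "aff b x = aff b (p0 + v + (aff a x / n) *\<^sub>R g)" by simp
    also have "\<dots> = (aff a x / n) * (fst b \<bullet> g)" using bv bp0
      by (simp add: aff_def inner_add_right algebra_simps)
    finally show "aff b x = ((fst b \<bullet> g) / n) * aff a x" by simp
  qed
qed

lemma refl_fix:
  assumes "fst a \<noteq> 0"
  shows "refl_pt a x = x \<longleftrightarrow> aff a x = 0"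
  using assms by (simp add: refl_pt_def grad_def)

lemma int_pair_bound:
  fixes m n :: int
  assumes "m * n = 4"
  shows "m \<in> {-4..4}"
proof -
  have "n \<noteq> 0" using assms by auto
  hence "1 \<le> \<bar>n\<bar>" by linarith
  hence "\<bar>m\<bar> * 1 \<le> \<bar>m\<bar> * \<bar>n\<bar>" by (intro mult_left_mono) auto
  hence "\<bar>m\<bar> \<le> \<bar>m * n\<bar>" by (simp add: abs_mult)
  thus ?thesis using assms by auto
qed

lemma loc_fin:
  fixes Phi :: "'v::euclidean_space afun set"
  assumes ars: "affine_root_system UNIV Phi" and M: "compact M"
  shows "finite {b\<in>Phi. \<exists>x\<in>M. aff b x = 0}"
proof -
  have nz: "\<And>a. a \<in> Phi \<Longrightarrow> fst a \<noteq> 0" using ars by (auto simp: affine_root_system_def grad_def)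
  have ar3: "\<And>a b. a \<in> Phi \<Longrightarrow> b \<in> Phi \<Longrightarrow> 2 * (fst a \<bullet> fst b) / (fst a \<bullet> fst a) \<in> \<int>"
    using ars by (auto simp: affine_root_system_def grad_def)
  have finW: "finite {w \<in> weyl_group Phi. w ` M \<inter> M \<noteq> {}}"
    using ars M by (auto simp: affine_root_system_def)
  define R where "R = {b\<in>Phi. \<exists>x\<in>M. aff b x = 0}"
  have rin: "refl_pt a \<in> weyl_group Phi" if "a \<in> Phi" for a
    using weyl_group.weyl_step[OF weyl_group.weyl_id that] by simp
  have img: "refl_pt ` R \<subseteq> {w \<in> weyl_group Phi. w ` M \<inter> M \<noteq> {}}"
  proof
    fix w assume "w \<in> refl_pt ` R"
    then obtain b x where b: "b \<in> Phi" "x \<in> M" "aff b x = 0" "w = refl_pt b" by (auto simp: R_def)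
    have "w x = x" using b refl_fix[OF nz[OF b(1)]] by simp
    hence "x \<in> w ` M \<inter> M" using b by (metis IntI image_eqI)
    thus "w \<in> {w \<in> weyl_group Phi. w ` M \<inter> M \<noteq> {}}" using b rin by blast
  qed
  hence finI: "finite (refl_pt ` R)" using finW finite_subset by blast
  have fib: "{b'\<in>Phi. refl_pt b' = refl_pt b} \<subseteq> (\<lambda>k. (real_of_int k / 2) *\<^sub>R b) ` {-4..4}"
    if bP: "b \<in> Phi" for b
  proof
    fix b' assume "b' \<in> {b'\<in>Phi. refl_pt b' = refl_pt b}"
    hence b'P: "b' \<in> Phi" and eq: "refl_pt b' = refl_pt b" by auto
    have "\<And>x. aff b x = 0 \<Longrightarrow> aff b' x = 0"
      using refl_fix[OF nz[OF bP]] refl_fix[OF nz[OF b'P]] eq by metis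
    then obtain l where l: "\<And>x. aff b' x = l * aff b x"
      using hyp_sub_prop[of UNIV b b'] nz[OF bP] by auto
    have "\<And>x. aff b' x = (l *\<^sub>R fst b) \<bullet> x + l * snd b" using l by (simp add: aff_def algebra_simps)
    from affs_eq_imp[OF this] have b'eq: "b' = l *\<^sub>R b" by (simp add: prod_eq_iff)
    have l0: "l \<noteq> 0" using nz[OF b'P] b'eq by auto
    have gg: "fst b \<bullet> fst b \<noteq> 0" using nz[OF bP] by simp
    have "2 * (fst b \<bullet> fst b') / (fst b \<bullet> fst b) = 2 * l" using gg b'eq by simp
    hence i1: "2 * l \<in> \<int>" using ar3[OF bP b'P] by simp
    have "2 * (fst b' \<bullet> fst b) / (fst b' \<bullet> fst b') = 2 / l" using gg b'eq l0 by (simp add: power2_eq_square)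
    hence i2: "2 / l \<in> \<int>" using ar3[OF b'P bP] by simp
    obtain m where m: "2 * l = of_int m" using i1 Ints_cases by metis
    obtain n where n: "2 / l = of_int n" using i2 Ints_cases by metis
    have "(2 * l) * (2 / l) = 4" using l0 by simp
    hence "of_int (m * n) = (4::real)" using m n by simp
    hence "m * n = 4" by linarith
    hence "m \<in> {-4..4}" by (rule int_pair_bound)
    moreover have "l = real_of_int m / 2" using m by simp
    ultimately show "b' \<in> (\<lambda>k. (real_of_int k / 2) *\<^sub>R b) ` {-4..4}" using b'eq by blast
  qed
  have "R \<subseteq> (\<Union>w\<in>refl_pt ` R. {b'\<in>Phi. refl_pt b' = w})" by (auto simp: R_def)
  moreover have "finite (\<Union>w\<in>refl_pt ` R. {b'\<in>Phi. refl_pt b' = w})"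
  proof (rule finite_UN_I[OF finI])
    fix w assume "w \<in> refl_pt ` R"
    then obtain b where "b \<in> Phi" "w = refl_pt b" by (auto simp: R_def)
    thus "finite {b'\<in>Phi. refl_pt b' = w}" using fib[of b] finite_subset by blast
  qed
  ultimately show ?thesis unfolding R_def by (rule finite_subset)
qed



locale setJ =
  fixes Phi J :: "'v::euclidean_space afun set" and C W :: "'v set" and SJ :: "'v afun set"
    and y :: 'v and d :: "'v afun \<Rightarrow> 'v"
  assumes ars: "affine_root_system UNIV Phi"
  and JP: "J \<subseteq> Phi" and inj: "inj_on grad J" and ind: "independent (grad ` J)"
  and W_def: "W = span (grad ` J)"
  and SJ_def: "SJ = {a\<in>Phi. fst a \<in> W}"
  and Ccomp: "C \<in> components (W - (\<Union>a\<in>SJ. hyp W a))"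
  and Jwall: "\<And>a. a\<in>J \<Longrightarrow> is_wall W a C"
  and Jpos: "\<And>a x. a\<in>J \<Longrightarrow> x \<in> C \<Longrightarrow> aff a x > 0"
  and yW: "y \<in> W" and yJ: "\<And>a. a\<in>J \<Longrightarrow> aff a y = 0"
  and dW: "\<And>a. a\<in>J \<Longrightarrow> d a \<in> W"
  and dJ: "\<And>a a'. a\<in>J \<Longrightarrow> a'\<in>J \<Longrightarrow> fst a' \<bullet> d a = (if a' = a then 1 else 0)"
begin

lemma finJ: "finite J"
  using finiteI_independent[OF ind] inj finite_imageD by blast

lemma subW: "subspace W" by (simp add: W_def)

lemma closedW: "closed W" using subW closed_subspace by blast

lemma JW: "a \<in> J \<Longrightarrow> fst a \<in> W"
  by (simp add: W_def grad_def span_base)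

lemma JSJ: "a \<in> J \<Longrightarrow> a \<in> SJ" using JP JW SJ_def by auto

lemma SJP: "b \<in> SJ \<Longrightarrow> b \<in> Phi" using SJ_def by auto

lemma SJW: "b \<in> SJ \<Longrightarrow> fst b \<in> W" using SJ_def by auto

lemma nzP: "b \<in> Phi \<Longrightarrow> fst b \<noteq> 0"
  using ars by (auto simp: affine_root_system_def grad_def)

lemma nz: "b \<in> SJ \<Longrightarrow> fst b \<noteq> 0" using nzP SJP by blast

lemma CW: "C \<subseteq> W" using Ccomp in_components_subset by blast

lemma Cne: "C \<noteq> {}" using Ccomp in_components_nonempty by blast

lemma Cconn: "connected C" using Ccomp in_components_connected by blast

lemma Cav: "x \<in> C \<Longrightarrow> b \<in> SJ \<Longrightarrow> aff b x \<noteq> 0"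
  using Ccomp in_components_subset CW by (fastforce simp: hyp_def)

lemma clCW: "closure C \<subseteq> W" using CW closedW closure_minimal by blast

lemma cont_aff: "continuous_on S (aff b)"
  unfolding aff_def by (intro continuous_intros)

lemma sign: assumes "b \<in> SJ" shows "(\<forall>x\<in>C. aff b x > 0) \<or> (\<forall>x\<in>C. aff b x < 0)"
proof (rule ccontr)
  assume "\<not> ?thesis"
  then obtain x1 x2 where x: "x1 \<in> C" "x2 \<in> C" "aff b x1 \<le> 0" "aff b x2 \<ge> 0" by force
  have "\<exists>z\<in>C. fst b \<bullet> z = - snd b"
    by (rule connected_ivt_hyperplane[OF Cconn x(1,2)]) (use x in \<open>auto simp: aff_def\<close>)
  then obtain z where "z \<in> C" "aff b z = 0" by (auto simp: aff_def)
  thus False using Cav assms by blast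
qed

lemma refl_root:
  assumes "a \<in> SJ" "b \<in> SJ"
  shows "\<exists>b'\<in>SJ. \<forall>x. aff b' x = aff b x - aff a x * (2 * (fst a \<bullet> fst b) / (fst a \<bullet> fst a))"
proof -
  obtain b' where b': "b' \<in> Phi" "\<And>x. aff b' x = aff b (refl_pt a x)"
  proof -
    have "\<forall>a\<in>Phi. \<forall>b\<in>Phi. \<exists>b'\<in>Phi. \<forall>x. aff b' x = aff b (refl_pt a x)"
      using ars by (simp add: affine_root_system_def)
    thus ?thesis using that assms SJP by blast
  qed
  define k where "k = 2 * (fst a \<bullet> fst b) / (fst a \<bullet> fst a)"
  have "\<And>x. aff b' x = (fst b - k *\<^sub>R fst a) \<bullet> x + (snd b - k * snd a)"
  proof -
    fix x
    have "aff b' x = aff b x - aff a x * k" using b'(2) aff_refl k_def by metis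
    thus "aff b' x = (fst b - k *\<^sub>R fst a) \<bullet> x + (snd b - k * snd a)"
      by (simp add: aff_def inner_diff_left algebra_simps)
  qed
  from affs_eq_imp[OF this] have "fst b' = fst b - k *\<^sub>R fst a" by simp
  hence "fst b' \<in> W" using SJW assms subW by (simp add: subspace_diff subspace_scale)
  hence "b' \<in> SJ" using b' SJ_def by auto
  thus ?thesis using b'(2) aff_refl k_def by metis
qed

lemma neg_root:
  assumes "b \<in> SJ" shows "\<exists>b'\<in>SJ. \<forall>x. aff b' x = - aff b x"
proof -
  obtain b' where "b' \<in> SJ" "\<And>x. aff b' x = aff b x - aff b x * (2 * (fst b \<bullet> fst b) / (fst b \<bullet> fst b))"
    using refl_root[OF assms assms] by blast
  moreover have "fst b \<bullet> fst b \<noteq> 0" using nz[OF assms] by simp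
  ultimately show ?thesis by (intro bexI[of _ b']) auto
qed

lemma pos_root:
  assumes "b \<in> SJ" shows "\<exists>b'\<in>SJ. (\<forall>x\<in>C. aff b' x > 0) \<and> (\<forall>x. aff b' x = 0 \<longleftrightarrow> aff b x = 0)"
proof (cases "\<forall>x\<in>C. aff b x > 0")
  case True thus ?thesis using assms by blast
next
  case False
  hence neg: "\<forall>x\<in>C. aff b x < 0" using sign[OF assms] by blast
  obtain b' where "b' \<in> SJ" "\<forall>x. aff b' x = - aff b x" using neg_root[OF assms] by blast
  thus ?thesis using neg by (intro bexI[of _ b']) auto
qed

lemma clos_ge:
  assumes "\<forall>x\<in>C. aff b x > 0" "p \<in> closure C" shows "aff b p \<ge> 0"
proof -
  have "closed {x. fst b \<bullet> x \<ge> - snd b}" by (rule closed_halfspace_ge)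
  moreover have "C \<subseteq> {x. fst b \<bullet> x \<ge> - snd b}" using assms(1) by (force simp: aff_def)
  ultimately have "closure C \<subseteq> {x. fst b \<bullet> x \<ge> - snd b}" by (rule closure_minimal[rotated])
  thus ?thesis using assms(2) by (force simp: aff_def)
qed

lemma approx_pos:
  assumes "p \<in> closure C" "aff b p > 0" shows "\<exists>x\<in>C. aff b x > 0"
proof -
  have o: "open {x. fst b \<bullet> x > - snd b}" by (rule open_halfspace_gt)
  have "p \<in> {x. fst b \<bullet> x > - snd b} \<inter> closure C" using assms by (auto simp: aff_def)
  hence "{x. fst b \<bullet> x > - snd b} \<inter> C \<noteq> {}" using open_Int_closure_eq_empty[OF o] by blast
  thus ?thesis by (force simp: aff_def)
qed

lemma approx_neg:
  assumes "p \<in> closure C" "aff b p < 0" shows "\<exists>x\<in>C. aff b x < 0"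
proof -
  have o: "open {x. fst b \<bullet> x < - snd b}" by (rule open_halfspace_lt)
  have "p \<in> {x. fst b \<bullet> x < - snd b} \<inter> closure C" using assms by (auto simp: aff_def)
  hence "{x. fst b \<bullet> x < - snd b} \<inter> C \<noteq> {}" using open_Int_closure_eq_empty[OF o] by blast
  thus ?thesis by (force simp: aff_def)
qed

lemma factA:
  assumes ab: "a \<in> SJ" "b \<in> SJ"
    and p: "p \<in> closure C" "aff a p = 0" "aff b p > 0"
    and q: "q \<in> closure C" "aff b q = 0" "aff a q > 0"
  shows "fst a \<bullet> fst b \<le> 0"
proof (rule ccontr)
  assume "\<not> ?thesis"
  hence pos: "fst a \<bullet> fst b > 0" by simp
  define k where "k = 2 * (fst a \<bullet> fst b) / (fst a \<bullet> fst a)"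
  have k0: "k > 0" using pos nz[OF ab(1)] by (simp add: k_def)
  obtain b' where b': "b' \<in> SJ" "\<And>x. aff b' x = aff b x - aff a x * k"
    using refl_root[OF ab] k_def by metis
  have "aff b' p > 0" using b'(2) p by simp
  then obtain x1 where x1: "x1 \<in> C" "aff b' x1 > 0" using approx_pos p(1) by blast
  have "aff b' q < 0" using b'(2) q k0 by simp
  then obtain x2 where x2: "x2 \<in> C" "aff b' x2 < 0" using approx_neg q(1) by blast
  have "\<exists>z\<in>C. fst b' \<bullet> z = - snd b'"
    by (rule connected_ivt_hyperplane[OF Cconn x2(1) x1(1)]) (use x1 x2 in \<open>auto simp: aff_def\<close>)
  then obtain z where "z \<in> C" "aff b' z = 0" by (auto simp: aff_def)
  thus False using Cav b'(1) by blast
qed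

lemma hypW_affine: "affine (hyp W b)"
proof -
  have "hyp W b = W \<inter> {x. fst b \<bullet> x = - snd b}" by (auto simp: hyp_def aff_def)
  thus ?thesis using affine_Int subspace_imp_affine[OF subW] affine_hyperplane by metis
qed

lemma eqW:
  assumes "u \<in> W" "u' \<in> W" "\<And>x. x \<in> W \<Longrightarrow> u \<bullet> x + c = u' \<bullet> x + c'"
  shows "u = u'"
proof -
  have "c = c'" using assms(3)[of 0] subW subspace_0 by auto
  moreover have "u - u' \<in> W" using assms subW subspace_diff by blast
  ultimately have "(u - u') \<bullet> (u - u') = 0" using assms(3)[of "u - u'"] by (simp add: inner_diff_left)
  thus ?thesis by simp
qed

lemma wallpt:
  assumes a: "a \<in> J" and b: "b \<in> SJ" and bpos: "\<forall>x\<in>C. aff b x > 0"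
    and np: "\<not> (\<exists>l. \<forall>x\<in>W. aff b x = l * aff a x)"
  shows "\<exists>p\<in>closure C. aff a p = 0 \<and> aff b p > 0"
proof (rule ccontr)
  assume "\<not> ?thesis"
  hence "\<And>p. p \<in> closure C \<Longrightarrow> aff a p = 0 \<Longrightarrow> aff b p = 0"
    using clos_ge[OF bpos] by force
  hence "hyp W a \<inter> closure C \<subseteq> hyp W b" by (auto simp: hyp_def)
  hence "affine hull (hyp W a \<inter> closure C) \<subseteq> hyp W b"
    using hull_minimal hypW_affine by blast
  hence "hyp W a \<subseteq> hyp W b" using Jwall[OF a] by (simp add: is_wall_def)
  hence "\<And>x. x \<in> W \<Longrightarrow> aff a x = 0 \<Longrightarrow> aff b x = 0" by (auto simp: hyp_def)
  hence "\<exists>l. \<forall>x\<in>W. aff b x = l * aff a x"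
    using hyp_sub_prop[OF subW JW[OF a] SJW[OF b] nz[OF JSJ[OF a]]] by blast
  thus False using np by blast
qed

lemma Jobtuse:
  assumes a: "a \<in> J" and a': "a' \<in> J" and ne: "a \<noteq> a'"
  shows "fst a \<bullet> fst a' \<le> 0"
proof -
  have gne: "fst a \<noteq> fst a'" using inj a a' ne by (auto simp: inj_on_def grad_def)
  have np: "\<not> (\<exists>l. \<forall>x\<in>W. aff c x = l * aff c' x)" if c: "c \<in> J" "c' \<in> J" "c \<noteq> c'" for c c'
  proof
    assume "\<exists>l. \<forall>x\<in>W. aff c x = l * aff c' x"
    then obtain l where l: "\<forall>x\<in>W. aff c x = l * aff c' x" by blast
    have lW: "l *\<^sub>R fst c' \<in> W" using JW[OF c(2)] subW subspace_scale by blast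
    have "fst c = l *\<^sub>R fst c'"
      by (rule eqW[of _ _ "snd c" "l * snd c'"]) (use l JW c lW in \<open>auto simp: aff_def algebra_simps\<close>)
    moreover have "fst c' \<in> grad ` J - {fst c}"
      using c inj unfolding inj_on_def grad_def by auto
    ultimately have "fst c \<in> span (grad ` J - {fst c})"
      by (simp add: span_base span_mul)
    moreover have "fst c \<in> grad ` J" using c by (auto simp: grad_def)
    ultimately have "dependent (grad ` J)" using dependent_def by blast
    thus False using ind by blast
  qed
  obtain p where p: "p \<in> closure C" "aff a p = 0" "aff a' p > 0"
    using wallpt[OF a JSJ[OF a'] _ np[OF a' a ne[symmetric]]] Jpos a' by blast
  obtain q where q: "q \<in> closure C" "aff a' q = 0" "aff a q > 0"
    using wallpt[OF a' JSJ[OF a] _ np[OF a a' ne]] Jpos a by blast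
  show ?thesis by (rule factA[OF JSJ[OF a] JSJ[OF a'] p q])
qed

lemma Wrep:
  assumes "v \<in> W" shows "\<exists>n. v = (\<Sum>a\<in>J. n a *\<^sub>R fst a)"
proof -
  have fG: "finite (grad ` J)" using finJ by simp
  obtain u where u: "v = (\<Sum>g\<in>grad ` J. u g *\<^sub>R g)"
    using assms span_finite[OF fG] W_def by auto
  also have "\<dots> = (\<Sum>a\<in>J. u (fst a) *\<^sub>R fst a)"
    using sum.reindex[OF inj, of "\<lambda>g. u g *\<^sub>R g"] by (simp add: grad_def)
  finally show ?thesis by (rule exI[of _ "\<lambda>a. u (fst a)"])
qed

lemma Jindep:
  assumes "(\<Sum>a\<in>J. n a *\<^sub>R fst a) = 0" "a \<in> J" shows "n a = 0"
proof -
  define m where "m = (\<lambda>g. n (the_inv_into J grad g))"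
  have "(\<Sum>g\<in>grad ` J. m g *\<^sub>R g) = (\<Sum>a\<in>J. m (grad a) *\<^sub>R grad a)"
    using sum.reindex[OF inj, of "\<lambda>g. m g *\<^sub>R g"] by simp
  also have "\<dots> = (\<Sum>a\<in>J. n a *\<^sub>R fst a)"
  proof (rule sum.cong[OF refl])
    fix a assume "a \<in> J"
    hence "m (grad a) = n a" using the_inv_into_f_f[OF inj] by (simp add: m_def)
    thus "m (grad a) *\<^sub>R grad a = n a *\<^sub>R fst a" by (simp add: grad_def)
  qed
  finally have "(\<Sum>g\<in>grad ` J. m g *\<^sub>R g) = 0" using assms(1) by simp
  hence "\<forall>g\<in>grad ` J. m g = 0"
    using ind finJ unfolding independent_explicit_finite_subsets by blast
  hence "m (grad a) = 0" using assms(2) by blast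
  thus ?thesis using the_inv_into_f_f[OF inj assms(2)] by (simp add: m_def)
qed

lemma Mmatrix:
  assumes "v \<in> W" "\<And>a. a \<in> J \<Longrightarrow> fst a \<bullet> v \<le> 0"
  shows "\<exists>n. (\<forall>a\<in>J. n a \<le> 0) \<and> v = (\<Sum>a\<in>J. n a *\<^sub>R fst a)"
proof -
  obtain n where n: "v = (\<Sum>a\<in>J. n a *\<^sub>R fst a)" using Wrep[OF assms(1)] by blast
  define np where "np = (\<lambda>a. max (n a) 0)"
  define nm where "nm = (\<lambda>a. max (- n a) 0)"
  define vp where "vp = (\<Sum>a\<in>J. np a *\<^sub>R fst a)"
  define vm where "vm = (\<Sum>a\<in>J. nm a *\<^sub>R fst a)"
  have nnp: "n a = np a - nm a" for a by (simp add: np_def nm_def max_def)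
  have "v = (\<Sum>a\<in>J. np a *\<^sub>R fst a - nm a *\<^sub>R fst a)"
    unfolding n by (rule sum.cong) (auto simp: nnp algebra_simps)
  hence vv: "v = vp - vm" by (simp add: vp_def vm_def sum_subtractf)
  have "vp \<bullet> vp = (\<Sum>a\<in>J. np a * (fst a \<bullet> vp))"
    by (simp add: vp_def inner_sum_left)
  also have "\<dots> = (\<Sum>a\<in>J. np a * (fst a \<bullet> v) + (\<Sum>a'\<in>J. np a * nm a' * (fst a \<bullet> fst a')))"
    by (rule sum.cong) (auto simp: vv vm_def inner_sum_right algebra_simps sum_distrib_left)
  also have "\<dots> \<le> 0"
  proof (rule sum_nonpos)
    fix a assume a: "a \<in> J"
    have t1: "np a * (fst a \<bullet> v) \<le> 0"
      using assms(2)[OF a] by (simp add: np_def mult_nonneg_nonpos)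
    have t2: "(\<Sum>a'\<in>J. np a * nm a' * (fst a \<bullet> fst a')) \<le> 0"
    proof (rule sum_nonpos)
      fix a' assume a': "a' \<in> J"
      show "np a * nm a' * (fst a \<bullet> fst a') \<le> 0"
      proof (cases "a = a'")
        case True thus ?thesis by (simp add: np_def nm_def max_def)
      next
        case False
        hence "fst a \<bullet> fst a' \<le> 0" using Jobtuse a a' by blast
        moreover have "np a * nm a' \<ge> 0" by (simp add: np_def nm_def)
        ultimately show ?thesis by (simp add: mult_nonneg_nonpos)
      qed
    qed
    show "np a * (fst a \<bullet> v) + (\<Sum>a'\<in>J. np a * nm a' * (fst a \<bullet> fst a')) \<le> 0"
      using t1 t2 by linarith
  qed
  finally have "vp = 0" by (metis inner_eq_zero_iff inner_ge_zero order_antisym)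
  hence "np a = 0" if "a \<in> J" for a using Jindep[of np a] that vp_def by simp
  hence "\<forall>a\<in>J. n a \<le> 0" unfolding np_def by (metis max.cobounded1)
  thus ?thesis using n by blast
qed

lemma KL:
  assumes b: "b \<in> SJ" and bpos: "\<forall>x\<in>C. aff b x > 0"
    and w: "w \<in> closure C" "aff b w = 0" "\<And>a. a \<in> J \<Longrightarrow> aff a w > 0"
  shows "aff b y > 0"
proof -
  have obt: "fst a \<bullet> fst b \<le> 0" if a: "a \<in> J" for a
  proof -
    have np: "\<not> (\<exists>l. \<forall>x\<in>W. aff b x = l * aff a x)"
    proof
      assume "\<exists>l. \<forall>x\<in>W. aff b x = l * aff a x"
      then obtain l where l: "\<forall>x\<in>W. aff b x = l * aff a x" by blast
      have "w \<in> W" using w(1) clCW by blast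
      hence "l = 0" using l w(2) w(3)[OF a] by simp
      hence "fst b = 0"
        by (intro eqW[of _ _ "snd b" 0]) (use l SJW[OF b] subW subspace_0 in \<open>auto simp: aff_def\<close>)
      thus False using nz[OF b] by blast
    qed
    obtain p where p: "p \<in> closure C" "aff a p = 0" "aff b p > 0"
      using wallpt[OF a b bpos np] by blast
    show ?thesis by (rule factA[OF JSJ[OF a] b p w(1) w(2) w(3)[OF a]])
  qed
  obtain n where n: "\<forall>a\<in>J. n a \<le> 0" "fst b = (\<Sum>a\<in>J. n a *\<^sub>R fst a)"
    using Mmatrix[OF SJW[OF b]] obt by (metis inner_commute)
  obtain z where z: "z \<in> C" using Cne by blast
  have "aff b z - aff b y = fst b \<bullet> (z - y)" by (simp add: aff_def inner_diff_right)
  also have "\<dots> = (\<Sum>a\<in>J. n a * (fst a \<bullet> (z - y)))" by (simp add: n(2) inner_sum_left)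
  also have "\<dots> = (\<Sum>a\<in>J. n a * aff a z)"
    by (rule sum.cong) (auto simp: yJ aff_def inner_diff_right dest!: yJ)
  also have "\<dots> \<le> 0"
    by (rule sum_nonpos) (use n(1) Jpos z in \<open>auto simp: mult_nonpos_nonneg less_imp_le\<close>)
  finally show ?thesis using bpos z by fastforce
qed

lemma aff_comb: "aff b ((1 - t) *\<^sub>R u + t *\<^sub>R v) = (1 - t) * aff b u + t * aff b v"
  by (simp add: aff_def inner_add_right algebra_simps)

lemma sub_C:
  assumes "connected T" "T \<subseteq> W" "\<And>x b. x \<in> T \<Longrightarrow> b \<in> SJ \<Longrightarrow> aff b x \<noteq> 0" "z \<in> T" "z \<in> C"
  shows "T \<subseteq> C"
proof (rule components_maximal[OF Ccomp assms(1)])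
  show "T \<subseteq> W - (\<Union>a\<in>SJ. hyp W a)" using assms(2,3) by (auto simp: hyp_def)
  show "C \<inter> T \<noteq> {}" using assms(4,5) by blast
qed

lemma exit:
  assumes z0: "z0 \<in> C" and z': "z' \<in> W"
  shows "(\<forall>t. 0 \<le> t \<and> t < 1 \<longrightarrow> (1 - t) *\<^sub>R z0 + t *\<^sub>R z' \<in> C) \<or>
    (\<exists>b\<in>SJ. \<exists>t. 0 < t \<and> t < 1 \<and> aff b ((1 - t) *\<^sub>R z0 + t *\<^sub>R z') = 0 \<and>
        (1 - t) *\<^sub>R z0 + t *\<^sub>R z' \<in> closure C \<and> (\<forall>x\<in>C. aff b x > 0) \<and> aff b z' < 0)"
proof -
  define zz where "zz = (\<lambda>t::real. (1 - t) *\<^sub>R z0 + t *\<^sub>R z')"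
  have z0W: "z0 \<in> W" using z0 CW by blast
  have zzW: "zz t \<in> W" for t unfolding zz_def using subW z0W z' by (simp add: subspace_add subspace_scale)
  have zz0: "zz 0 = z0" by (simp add: zz_def)
  have contzz: "continuous_on S zz" for S unfolding zz_def by (intro continuous_intros)
  define F where "F = {b\<in>Phi. \<exists>x\<in>closed_segment z0 z'. aff b x = 0}"
  have finF: "finite F" unfolding F_def by (rule loc_fin[OF ars compact_segment])
  define Ts where "Ts = {t. 0 \<le> t \<and> t < 1 \<and> (\<exists>b\<in>SJ. aff b (zz t) = 0)}"
  have Tsub: "Ts \<subseteq> (\<Union>b\<in>F. {aff b z0 / (aff b z0 - aff b z')})"
  proof
    fix t assume "t \<in> Ts"
    then obtain b where t: "0 \<le> t" "t < 1" "b \<in> SJ" "aff b (zz t) = 0" by (auto simp: Ts_def)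
    have "zz t \<in> closed_segment z0 z'" using t unfolding zz_def closed_segment_def by auto
    hence bF: "b \<in> F" using t SJP by (auto simp: F_def)
    have A: "aff b z0 \<noteq> 0" using Cav z0 t(3) by blast
    have eq: "(1 - t) * aff b z0 + t * aff b z' = 0" using t(4) by (simp add: zz_def aff_comb)
    hence "aff b z0 = t * (aff b z0 - aff b z')" by (simp add: algebra_simps)
    moreover hence nz0: "aff b z0 - aff b z' \<noteq> 0" using A by auto
    ultimately have "t = aff b z0 / (aff b z0 - aff b z')" by (simp add: field_simps)
    thus "t \<in> (\<Union>b\<in>F. {aff b z0 / (aff b z0 - aff b z')})" using bF by blast
  qed
  have finT: "finite Ts" by (rule finite_subset[OF Tsub]) (use finF in auto)
  show ?thesis
  proof (cases "Ts = {}")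
    case True
    have "zz ` {0..<1} \<subseteq> C"
    proof (rule sub_C)
      show "connected (zz ` {0..<1})" by (rule connected_continuous_image[OF contzz]) simp
      show "zz ` {0..<1} \<subseteq> W" using zzW by blast
      show "\<And>x b. x \<in> zz ` {0..<1} \<Longrightarrow> b \<in> SJ \<Longrightarrow> aff b x \<noteq> 0" using True by (auto simp: Ts_def)
      show "z0 \<in> zz ` {0..<1}" using zz0 by force
    qed (rule z0)
    thus ?thesis unfolding zz_def by auto
  next
    case False
    define ts where "ts = Min Ts"
    have tsT: "ts \<in> Ts" using Min_in[OF finT False] ts_def by simp
    then obtain b where tb: "0 \<le> ts" "ts < 1" "b \<in> SJ" "aff b (zz ts) = 0" by (auto simp: Ts_def)
    have ts0: "ts > 0"
    proof (rule ccontr)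
      assume "\<not> ts > 0" hence "ts = 0" using tb by simp
      thus False using tb Cav z0 zz0 by auto
    qed
    have below: "s \<notin> Ts" if "s < ts" for s using that Min_le[OF finT] ts_def by force
    have sub: "zz ` {0..<ts} \<subseteq> C"
    proof (rule sub_C)
      show "connected (zz ` {0..<ts})" by (rule connected_continuous_image[OF contzz]) simp
      show "zz ` {0..<ts} \<subseteq> W" using zzW by blast
      show "\<And>x b. x \<in> zz ` {0..<ts} \<Longrightarrow> b \<in> SJ \<Longrightarrow> aff b x \<noteq> 0"
        using below tb(2) by (auto simp: Ts_def)
      show "z0 \<in> zz ` {0..<ts}" using zz0 ts0 by force
    qed (rule z0)
    have "zz ` closure {0..<ts} \<subseteq> closure C"
      by (rule image_closure_subset[OF contzz]) (use sub closure_subset in auto)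
    hence zcl: "zz ts \<in> closure C" using ts0 by auto
    obtain b' where b': "b' \<in> SJ" "\<forall>x\<in>C. aff b' x > 0" "\<And>x. aff b' x = 0 \<longleftrightarrow> aff b x = 0"
      using pos_root[OF tb(3)] by blast
    have zb': "aff b' (zz ts) = 0" using b'(3) tb(4) by blast
    have eq: "(1 - ts) * aff b' z0 + ts * aff b' z' = 0" using zb' by (simp add: zz_def aff_comb)
    have "aff b' z' < 0"
    proof (rule ccontr)
      assume "\<not> aff b' z' < 0"
      hence "ts * aff b' z' \<ge> 0" using ts0 by simp
      moreover have "(1 - ts) * aff b' z0 > 0" using tb(2) b'(2) z0 by simp
      ultimately show False using eq by linarith
    qed
    thus ?thesis using b' ts0 tb(2) zb' zcl unfolding zz_def by blast
  qed
qed

lemma toward_y: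
  assumes z: "z \<in> C" and t: "0 \<le> t" "t < 1"
  shows "(1 - t) *\<^sub>R z + t *\<^sub>R y \<in> C"
proof -
  have nex: "\<not> (\<exists>b\<in>SJ. \<exists>t. 0 < t \<and> t < 1 \<and> aff b ((1 - t) *\<^sub>R z + t *\<^sub>R y) = 0 \<and>
        (1 - t) *\<^sub>R z + t *\<^sub>R y \<in> closure C \<and> (\<forall>x\<in>C. aff b x > 0) \<and> aff b y < 0)"
  proof
    assume "\<exists>b\<in>SJ. \<exists>t. 0 < t \<and> t < 1 \<and> aff b ((1 - t) *\<^sub>R z + t *\<^sub>R y) = 0 \<and>
        (1 - t) *\<^sub>R z + t *\<^sub>R y \<in> closure C \<and> (\<forall>x\<in>C. aff b x > 0) \<and> aff b y < 0"
    then obtain b s where bs: "b \<in> SJ" "0 < s" "s < 1" "aff b ((1 - s) *\<^sub>R z + s *\<^sub>R y) = 0"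
      "(1 - s) *\<^sub>R z + s *\<^sub>R y \<in> closure C" "\<forall>x\<in>C. aff b x > 0" "aff b y < 0" by blast
    have "\<And>a. a \<in> J \<Longrightarrow> aff a ((1 - s) *\<^sub>R z + s *\<^sub>R y) > 0"
      using bs(3) Jpos z yJ by (simp add: aff_comb)
    hence "aff b y > 0" using KL[OF bs(1) bs(6) bs(5) bs(4)] by blast
    thus False using bs(7) by simp
  qed
  have all: "\<forall>t. 0 \<le> t \<and> t < 1 \<longrightarrow> (1 - t) *\<^sub>R z + t *\<^sub>R y \<in> C"
  proof -
    from exit[OF z yW] show ?thesis
    proof
      assume "\<forall>t. 0 \<le> t \<and> t < 1 \<longrightarrow> (1 - t) *\<^sub>R z + t *\<^sub>R y \<in> C" thus ?thesis .
    next
      assume "\<exists>b\<in>SJ. \<exists>t. 0 < t \<and> t < 1 \<and> aff b ((1 - t) *\<^sub>R z + t *\<^sub>R y) = 0 \<and>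
        (1 - t) *\<^sub>R z + t *\<^sub>R y \<in> closure C \<and> (\<forall>x\<in>C. aff b x > 0) \<and> aff b y < 0"
      with nex show ?thesis by contradiction
    qed
  qed
  thus ?thesis using t by blast
qed

lemma r_exists: "\<exists>r>0. \<forall>b\<in>SJ. \<forall>x\<in>W. dist x y < r \<longrightarrow> aff b x = 0 \<longrightarrow> aff b y = 0"
proof -
  define F1 where "F1 = {b\<in>Phi. \<exists>x\<in>cball y 1. aff b x = 0}"
  have finF: "finite F1" unfolding F1_def by (rule loc_fin[OF ars compact_cball])
  define F2 where "F2 = {b\<in>F1. aff b y \<noteq> 0}"
  have finF2: "finite F2" using finF by (simp add: F2_def)
  have "\<forall>b\<in>F2. eventually (\<lambda>x. aff b x \<noteq> 0) (nhds y)"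
  proof
    fix b assume "b \<in> F2"
    hence yb: "aff b y \<noteq> 0" by (simp add: F2_def)
    have "open {x. aff b x \<noteq> 0}" unfolding aff_def by (intro open_Collect_neq continuous_intros)
    thus "eventually (\<lambda>x. aff b x \<noteq> 0) (nhds y)" unfolding eventually_nhds
      using yb by (intro exI[of _ "{x. aff b x \<noteq> 0}"]) auto
  qed
  hence "eventually (\<lambda>x. \<forall>b\<in>F2. aff b x \<noteq> 0) (nhds y)" by (rule eventually_ball_finite[OF finF2])
  then obtain d where d: "d > 0" "\<And>x. dist x y < d \<Longrightarrow> \<forall>b\<in>F2. aff b x \<noteq> 0"
    unfolding eventually_nhds_metric by blast
  show ?thesis
  proof (intro exI[of _ "min d 1"] conjI ballI impI)
    show "min d 1 > 0" using d by simp
    fix b x assume b: "b \<in> SJ" and x: "x \<in> W" and dx: "dist x y < min d 1" and bx: "aff b x = 0"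
    show "aff b y = 0"
    proof (rule ccontr)
      assume "aff b y \<noteq> 0"
      moreover have "x \<in> cball y 1" using dx by (simp add: dist_commute)
      ultimately have "b \<in> F2" using b bx SJP by (auto simp: F2_def F1_def)
      thus False using d(2)[of x] dx bx by auto
    qed
  qed
qed

lemma local_orthant:
  "\<exists>r>0. \<forall>x\<in>W. dist x y < r \<longrightarrow> (\<forall>a\<in>J. aff a x > 0) \<longrightarrow> (\<forall>b\<in>SJ. aff b x \<noteq> 0)"
proof -
  obtain r where r: "r > 0" "\<And>b x. b\<in>SJ \<Longrightarrow> x\<in>W \<Longrightarrow> dist x y < r \<Longrightarrow> aff b x = 0 \<Longrightarrow> aff b y = 0"
    using r_exists by blast
  define U where "U = ball y r \<inter> (\<Inter>a\<in>J. {x. fst a \<bullet> x > - snd a})"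
  have Uiff: "x \<in> U \<longleftrightarrow> dist x y < r \<and> (\<forall>a\<in>J. aff a x > 0)" for x
    by (auto simp: U_def aff_def dist_commute)
  have Uconv: "convex U" unfolding U_def
    by (rule convex_Int[OF convex_ball convex_INT]) (simp add: convex_halfspace_gt)
  have Uopen: "open U" unfolding U_def
    by (rule open_Int[OF open_ball open_INT[OF finJ]]) (simp add: open_halfspace_gt)
  obtain z where z: "z \<in> C" using Cne by blast
  define s where "s = min (1/2) (r / (2 * (norm (z - y) + 1)))"
  have "0 < 2 * (norm (z - y) + 1)" by (simp add: add_nonneg_pos)
  hence "0 < r / (2 * (norm (z - y) + 1))" using r(1) by simp
  hence s: "0 < s" "s \<le> 1/2" unfolding s_def by (simp_all add: min_def)
  define z0 where "z0 = (1 - (1 - s)) *\<^sub>R z + (1 - s) *\<^sub>R y"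
  have z0C: "z0 \<in> C" unfolding z0_def by (rule toward_y[OF z]) (use s in auto)
  have "z0 - y = s *\<^sub>R (z - y)" by (simp add: z0_def algebra_simps)
  hence "dist z0 y = s * norm (z - y)" using s by (simp add: dist_norm)
  also have "\<dots> < r"
  proof -
    have n0: "norm (z - y) \<ge> 0" by simp
    have "s * norm (z - y) \<le> (r / (2 * (norm (z - y) + 1))) * norm (z - y)"
      by (rule mult_right_mono) (auto simp: s_def)
    also have "\<dots> < r"
    proof -
      have p: "0 < 2 * (norm (z - y) + 1)" by (simp add: add_nonneg_pos)
      have "r * norm (z - y) < r * (2 * (norm (z - y) + 1))"
        using r(1) p by (intro mult_strict_left_mono) auto
      hence "r * norm (z - y) / (2 * (norm (z - y) + 1)) < r"
        using p by (simp add: pos_divide_less_eq)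
      thus ?thesis by simp
    qed
    finally show ?thesis .
  qed
  finally have z0U: "z0 \<in> U" using Uiff Jpos z0C by blast
  show ?thesis
  proof (intro exI[of _ r] conjI ballI impI r(1))
    fix x b assume xW: "x \<in> W" and dx: "dist x y < r" and xa: "\<forall>a\<in>J. aff a x > 0" and b0: "b \<in> SJ"
    show "aff b x \<noteq> 0"
    proof
      assume bx0: "aff b x = 0"
      obtain b1 where b1: "b1 \<in> SJ" "\<forall>x\<in>C. aff b1 x > 0" "\<And>x. aff b1 x = 0 \<longleftrightarrow> aff b x = 0"
        using pos_root[OF b0] by blast
      have b1x: "aff b1 x = 0" using b1(3) bx0 by blast
      have xU: "x \<in> U" using Uiff dx xa by blast
      obtain e where e: "e > 0" "ball x e \<subseteq> U" using Uopen xU open_contains_ball by blast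
      define g where "g = fst b1"
      have g0: "g \<noteq> 0" using nz[OF b1(1)] g_def by simp
      define x' where "x' = x - (e / (2 * norm g)) *\<^sub>R g"
      have x'W: "x' \<in> W" unfolding x'_def g_def using xW SJW[OF b1(1)] subW
        by (simp add: subspace_diff subspace_scale)
      have "dist x x' = e / 2" using g0 e by (simp add: x'_def dist_norm)
      hence x'U: "x' \<in> U" using e by auto
      have "aff b1 x' = aff b1 x - (e / (2 * norm g)) * (g \<bullet> g)"
        by (simp add: x'_def aff_def g_def inner_diff_right algebra_simps)
      also have "\<dots> < 0" using b1x e g0 by (simp add: divide_pos_pos)
      finally have b1x': "aff b1 x' < 0" .
      show False
        using exit[OF z0C x'W]
      proof
        assume all: "\<forall>t. 0 \<le> t \<and> t < 1 \<longrightarrow> (1 - t) *\<^sub>R z0 + t *\<^sub>R x' \<in> C"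
        define zz where "zz = (\<lambda>t::real. (1 - t) *\<^sub>R z0 + t *\<^sub>R x')"
        have cz: "continuous_on (closure {0..<1}) zz" unfolding zz_def by (intro continuous_intros)
        have "zz ` {0..<1} \<subseteq> closure C" using all closure_subset unfolding zz_def by fastforce
        hence "zz ` closure {0..<1} \<subseteq> closure C"
          by (rule image_closure_subset[OF cz closed_closure])
        hence "zz 1 \<in> closure C" by auto
        hence "aff b1 x' \<ge> 0" using clos_ge[OF b1(2)] by (simp add: zz_def)
        thus False using b1x' by simp
      next
        assume "\<exists>b\<in>SJ. \<exists>t. 0 < t \<and> t < 1 \<and> aff b ((1 - t) *\<^sub>R z0 + t *\<^sub>R x') = 0 \<and>
          (1 - t) *\<^sub>R z0 + t *\<^sub>R x' \<in> closure C \<and> (\<forall>x\<in>C. aff b x > 0) \<and> aff b x' < 0"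
        then obtain b2 t where bt: "b2 \<in> SJ" "0 < t" "t < 1" "aff b2 ((1 - t) *\<^sub>R z0 + t *\<^sub>R x') = 0"
          "(1 - t) *\<^sub>R z0 + t *\<^sub>R x' \<in> closure C" "\<forall>x\<in>C. aff b2 x > 0" by blast
        define w where "w = (1 - t) *\<^sub>R z0 + t *\<^sub>R x'"
        have wU: "w \<in> U" unfolding w_def using convexD[OF Uconv z0U x'U] bt by simp
        have wW: "w \<in> W" using bt(5) clCW w_def by blast
        have "aff b2 y = 0" using r(2)[OF bt(1) wW] wU Uiff bt(4) w_def by blast
        moreover have "aff b2 y > 0" using KL[OF bt(1) bt(6)] bt(5) bt(4) wU Uiff w_def by blast
        ultimately show False by simp
      qed
    qed
  qed
qed

end


lemma small_step:
  fixes u :: "'v::real_normed_vector"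
  assumes "0 < \<delta>" shows "\<exists>s>0. s * norm u < \<delta>"
proof -
  have p: "0 < norm u + 1" by (simp add: add_nonneg_pos)
  define s where "s = \<delta> / (2 * (norm u + 1))"
  have s0: "s > 0" using assms p by (simp add: s_def)
  have "s * norm u \<le> s * (norm u + 1)" using s0 by simp
  also have "\<dots> = \<delta> / 2" using p unfolding s_def by (simp add: field_simps)
  also have "\<dots> < \<delta>" using assms by simp
  finally show ?thesis using s0 by blast
qed

lemma avoid:
  fixes S :: "'v::euclidean_space set" and F :: "('v \<times> real) set"
  assumes S: "subspace S" and fin: "finite F" and nd: "\<forall>p\<in>F. \<exists>s\<in>S. fst p \<bullet> s \<noteq> 0"
  shows "v0 \<in> S \<Longrightarrow> \<epsilon> > 0 \<Longrightarrow> \<exists>v\<in>S. dist v v0 < \<epsilon> \<and> (\<forall>p\<in>F. fst p \<bullet> v + snd p \<noteq> 0)"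
  using fin nd
proof (induction F arbitrary: v0 \<epsilon> rule: finite_induct)
  case empty thus ?case by (intro bexI[of _ v0]) auto
next
  case (insert q F)
  obtain v1 where v1: "v1 \<in> S" "dist v1 v0 < \<epsilon> / 2" "\<forall>p\<in>F. fst p \<bullet> v1 + snd p \<noteq> 0"
    using insert.IH[of v0 "\<epsilon>/2"] insert.prems by auto
  have "\<forall>p\<in>F. eventually (\<lambda>v. fst p \<bullet> v + snd p \<noteq> 0) (nhds v1)"
  proof
    fix p assume "p \<in> F"
    hence yb: "fst p \<bullet> v1 + snd p \<noteq> 0" using v1 by blast
    have "open {v. fst p \<bullet> v + snd p \<noteq> 0}" by (intro open_Collect_neq continuous_intros)
    thus "eventually (\<lambda>v. fst p \<bullet> v + snd p \<noteq> 0) (nhds v1)" unfolding eventually_nhds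
      using yb by (intro exI[of _ "{v. fst p \<bullet> v + snd p \<noteq> 0}"]) auto
  qed
  hence "eventually (\<lambda>v. \<forall>p\<in>F. fst p \<bullet> v + snd p \<noteq> 0) (nhds v1)"
    by (rule eventually_ball_finite[OF insert.hyps(1)])
  then obtain \<delta> where \<delta>: "\<delta> > 0" "\<And>v. dist v v1 < \<delta> \<Longrightarrow> \<forall>p\<in>F. fst p \<bullet> v + snd p \<noteq> 0"
    unfolding eventually_nhds_metric by blast
  show ?case
  proof (cases "fst q \<bullet> v1 + snd q = 0")
    case False
    thus ?thesis using v1 insert.prems by (intro bexI[of _ v1]) auto
  next
    case True
    obtain s where s: "s \<in> S" "fst q \<bullet> s \<noteq> 0" using insert.prems by auto
    have "0 < min \<delta> (\<epsilon>/2)" using \<delta> insert.prems by simp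
    then obtain t where t: "t > 0" "t * norm s < min \<delta> (\<epsilon>/2)" using small_step by blast
    define v where "v = v1 + t *\<^sub>R s"
    have vS: "v \<in> S" using S v1 s by (simp add: v_def subspace_add subspace_scale)
    have dv: "dist v v1 = t * norm s" using t by (simp add: v_def dist_norm)
    have "dist v v0 \<le> dist v v1 + dist v1 v0" by (rule dist_triangle)
    hence "dist v v0 < \<epsilon>" using dv t v1 by linarith
    moreover have "\<forall>p\<in>F. fst p \<bullet> v + snd p \<noteq> 0" using \<delta>(2)[of v] dv t by simp
    moreover have "fst q \<bullet> v + snd q \<noteq> 0"
    proof -
      have "fst q \<bullet> v + snd q = t * (fst q \<bullet> s)" using True by (simp add: v_def inner_add_right)
      thus ?thesis using t s by simp
    qed
    ultimately show ?thesis using vS by (intro bexI[of _ v]) auto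
  qed
qed

lemma dual_one:
  fixes J :: "'v::euclidean_space afun set"
  assumes inj: "inj_on grad J" and ind: "independent (grad ` J)" and a: "a \<in> J"
  shows "\<exists>u. u \<in> span (grad ` J) \<and> (\<forall>a'\<in>J. fst a' \<bullet> u = (if a' = a then 1 else 0))"
proof -
  define G where "G = grad ` J"
  define g where "g = fst a"
  have gG: "g \<in> G" using a by (simp add: G_def g_def grad_def)
  obtain p q where pq: "p \<in> span (G - {g})" "\<And>w. w \<in> span (G - {g}) \<Longrightarrow> orthogonal q w" "g = p + q"
    using orthogonal_subspace_decomp_exists by blast
  have q0: "q \<noteq> 0"
  proof
    assume "q = 0"
    hence gp: "g = p" using pq(3) by simp
    have "g \<in> span (G - {g})" using pq(1) gp by simp
    hence "dependent G" unfolding dependent_def using gG by blast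
    thus False using ind by (simp add: G_def)
  qed
  have qp: "q \<bullet> p = 0" using pq(2)[OF pq(1)] by (simp add: orthogonal_def)
  have pq0: "p \<bullet> q = 0" using qp inner_commute[of p q] by linarith
  have "g \<bullet> q = (p + q) \<bullet> q" using pq(3) by simp
  also have "\<dots> = q \<bullet> q" using pq0 by (simp add: inner_add_left)
  finally have qg: "g \<bullet> q = q \<bullet> q" .
  define u where "u = (1 / (q \<bullet> q)) *\<^sub>R q"
  have "p \<in> span G" using pq(1) span_mono[of "G - {g}" G] by blast
  moreover have "g \<in> span G" using gG span_base by blast
  ultimately have "g - p \<in> span G" by (simp add: span_diff)
  moreover have "g - p = q" using pq(3) by simp
  ultimately have "q \<in> span G" by simp
  hence uG: "u \<in> span G" by (simp add: u_def span_mul)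
  have "fst a' \<bullet> u = (if a' = a then 1 else 0)" if a': "a' \<in> J" for a'
  proof (cases "a' = a")
    case True thus ?thesis using qg q0 by (simp add: u_def g_def)
  next
    case False
    hence "grad a' \<noteq> grad a" using inj a a' inj_on_eq_iff by metis
    moreover have "grad a' \<in> G" using a' by (simp add: G_def)
    ultimately have "fst a' \<in> G - {g}" by (simp add: g_def grad_def)
    hence "orthogonal q (fst a')" by (intro pq(2) span_base)
    thus ?thesis using False by (simp add: u_def orthogonal_def inner_commute)
  qed
  hence "\<forall>a'\<in>J. fst a' \<bullet> u = (if a' = a then 1 else 0)" by blast
  moreover have "u \<in> span (grad ` J)" using uG unfolding G_def .
  ultimately show ?thesis by blast
qed

lemma dual_exists:
  fixes J :: "'v::euclidean_space afun set"
  assumes inj: "inj_on grad J" and ind: "independent (grad ` J)"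
  shows "\<exists>d. (\<forall>a\<in>J. d a \<in> span (grad ` J)) \<and> (\<forall>a\<in>J. \<forall>a'\<in>J. fst a' \<bullet> d a = (if a' = a then 1 else 0))"
proof -
  have "\<forall>a\<in>J. \<exists>u. u \<in> span (grad ` J) \<and> (\<forall>a'\<in>J. fst a' \<bullet> u = (if a' = a then 1 else 0))"
    using dual_one[OF inj ind] by blast
  hence "\<exists>d. \<forall>a\<in>J. d a \<in> span (grad ` J) \<and> (\<forall>a'\<in>J. fst a' \<bullet> d a = (if a' = a then 1 else 0))"
    by (rule bchoice)
  then obtain d where "\<forall>a\<in>J. d a \<in> span (grad ` J) \<and> (\<forall>a'\<in>J. fst a' \<bullet> d a = (if a' = a then 1 else 0))" ..
  thus ?thesis by blast
qed



context setJ begin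

lemma final:
  assumes Jhalf: "\<And>a. a \<in> J \<Longrightarrow> (1/2) *\<^sub>R a \<notin> SJ"
  shows "\<exists>B'. is_basis UNIV Phi B' \<and> J \<subseteq> B'"
proof -
  obtain r where r: "r > 0" and P0: "\<forall>x\<in>W. dist x y < r \<longrightarrow> (\<forall>a\<in>J. aff a x > 0) \<longrightarrow> (\<forall>b\<in>SJ. aff b x \<noteq> 0)"
    using local_orthant by blast
  have P: "aff b x \<noteq> 0" if "x \<in> W" "dist x y < r" "\<forall>a\<in>J. aff a x > 0" "b \<in> SJ" for x b
    using P0 that by blast
  define S0 where "S0 = {v. \<forall>a\<in>J. fst a \<bullet> v = 0}"
  have S0sub: "subspace S0" by (auto simp: subspace_def S0_def inner_add_right)
  have orth: "w \<bullet> v = 0" if w: "w \<in> W" and v: "v \<in> S0" for w v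
  proof -
    have "span (grad ` J) \<subseteq> {w. w \<bullet> v = 0}"
      by (rule span_minimal) (use v in \<open>auto simp: S0_def grad_def subspace_def inner_add_left\<close>)
    thus ?thesis using w W_def by blast
  qed
  have decomp: "\<exists>hW hp. hW \<in> W \<and> hp \<in> S0 \<and> h = hW + hp" for h
  proof -
    obtain p q where pq: "p \<in> span (grad ` J)" "\<And>w. w \<in> span (grad ` J) \<Longrightarrow> orthogonal q w" "h = p + q"
      using orthogonal_subspace_decomp_exists by blast
    have "fst a \<bullet> q = 0" if "a \<in> J" for a
    proof -
      have "fst a \<in> span (grad ` J)" using that by (intro span_base) (simp add: grad_def)
      hence "orthogonal q (fst a)" by (rule pq(2))
      thus ?thesis by (simp add: orthogonal_def inner_commute)
    qed
    hence "q \<in> S0" by (simp add: S0_def)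
    moreover have "p \<in> W" using pq(1) W_def by simp
    ultimately show ?thesis using pq(3) by blast
  qed
  define F0 where "F0 = {b\<in>Phi. \<exists>x\<in>cball y r. aff b x = 0}"
  have finF0: "finite F0" unfolding F0_def by (rule loc_fin[OF ars compact_cball])
  define N where "N = {b\<in>F0. fst b \<notin> W}"
  have finN: "finite N" using finF0 by (simp add: N_def)
  define PN where "PN = (\<lambda>b. (fst b, aff b y)) ` N"
  have finPN: "finite PN" using finN by (simp add: PN_def)
  have nd: "\<forall>p\<in>PN. \<exists>s\<in>S0. fst p \<bullet> s \<noteq> 0"
  proof
    fix p assume "p \<in> PN"
    then obtain b where b: "b \<in> N" "p = (fst b, aff b y)" by (auto simp: PN_def)
    obtain hW hp where h: "hW \<in> W" "hp \<in> S0" "fst b = hW + hp" using decomp by blast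
    have hp0: "hp \<noteq> 0" using h b(1) by (auto simp: N_def)
    have "fst b \<bullet> hp = hp \<bullet> hp" using orth[OF h(1) h(2)] by (simp add: h(3) inner_add_left)
    hence "fst p \<bullet> hp \<noteq> 0" using hp0 b(2) by simp
    thus "\<exists>s\<in>S0. fst p \<bullet> s \<noteq> 0" using h(2) by blast
  qed
  have r2: "r / 2 > 0" using r by simp
  obtain v where v: "v \<in> S0" "dist v 0 < r / 2" "\<forall>p\<in>PN. fst p \<bullet> v + snd p \<noteq> 0"
    using avoid[OF S0sub finPN nd subspace_0[OF S0sub] r2] by blast
  define y' where "y' = y + v"
  have yN: "aff b y' \<noteq> 0" if "b \<in> N" for b
  proof -
    have "(fst b, aff b y) \<in> PN" using that by (simp add: PN_def)
    hence "fst b \<bullet> v + aff b y \<noteq> 0" using v(3) by fastforce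
    thus ?thesis by (simp add: y'_def aff_def inner_add_right algebra_simps)
  qed
  have y'J: "aff a y' = 0" if "a \<in> J" for a
    using that v(1) yJ[OF that] by (simp add: S0_def y'_def aff_def inner_add_right algebra_simps)
  have dyy: "dist y' y < r / 2" using v(2) by (simp add: y'_def dist_norm)
  have "\<forall>b\<in>N. eventually (\<lambda>x. aff b x \<noteq> 0) (nhds y')"
  proof
    fix b assume "b \<in> N"
    hence yb: "aff b y' \<noteq> 0" by (rule yN)
    have "open {x. aff b x \<noteq> 0}" unfolding aff_def by (intro open_Collect_neq continuous_intros)
    thus "eventually (\<lambda>x. aff b x \<noteq> 0) (nhds y')" unfolding eventually_nhds
      using yb by (intro exI[of _ "{x. aff b x \<noteq> 0}"]) auto
  qed
  hence "eventually (\<lambda>x. \<forall>b\<in>N. aff b x \<noteq> 0) (nhds y')" by (rule eventually_ball_finite[OF finN])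
  then obtain dd where dd: "dd > 0" "\<And>x. dist x y' < dd \<Longrightarrow> \<forall>b\<in>N. aff b x \<noteq> 0"
    unfolding eventually_nhds_metric by blast
  define r' where "r' = min dd (r / 2)"
  have r'0: "r' > 0" using dd r by (simp add: r'_def)
  define Ob where "Ob = ball y' r' \<inter> (\<Inter>a\<in>J. {x. fst a \<bullet> x > - snd a})"
  have Oiff: "x \<in> Ob \<longleftrightarrow> dist x y' < r' \<and> (\<forall>a\<in>J. aff a x > 0)" for x
    by (auto simp: Ob_def aff_def dist_commute)
  have Oconv: "convex Ob" unfolding Ob_def
    by (rule convex_Int[OF convex_ball convex_INT]) (simp add: convex_halfspace_gt)
  have Oav: "aff b x \<noteq> 0" if x: "x \<in> Ob" and b: "b \<in> Phi" for x b
  proof -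
    have dx: "dist x y' < r'" and xa: "\<forall>a\<in>J. aff a x > 0" using x Oiff by auto
    have "dist x y \<le> dist x y' + dist y' y" by (rule dist_triangle)
    hence dxy: "dist x y < r" using dx dyy by (simp add: r'_def)
    show ?thesis
    proof (cases "b \<in> F0")
      case False
      have "x \<in> cball y r" using dxy by (simp add: dist_commute)
      thus ?thesis using False b by (auto simp: F0_def)
    next
      case True
      show ?thesis
      proof (cases "fst b \<in> W")
        case False
        hence "b \<in> N" using True by (simp add: N_def)
        moreover have "dist x y' < dd" using dx by (simp add: r'_def)
        ultimately show ?thesis using dd(2) by blast
      next
        case bW: True
        have bS: "b \<in> SJ" using b bW by (simp add: SJ_def)
        obtain hW hp where h: "hW \<in> W" "hp \<in> S0" "x - y' = hW + hp" using decomp by blast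
        define xW where "xW = y + hW"
        have xWW: "xW \<in> W" using yW h(1) subW by (simp add: xW_def subspace_add)
        have affeq: "aff c x = aff c xW" if "fst c \<in> W" for c
        proof -
          have "x = y + v + hW + hp" using h(3) by (simp add: y'_def algebra_simps)
          hence "aff c x = fst c \<bullet> y + fst c \<bullet> v + fst c \<bullet> hW + fst c \<bullet> hp + snd c"
            by (simp add: aff_def inner_add_right)
          also have "\<dots> = aff c xW" using orth[OF that v(1)] orth[OF that h(2)]
            by (simp add: xW_def aff_def inner_add_right)
          finally show ?thesis .
        qed
        have "orthogonal hW hp" using orth[OF h(1) h(2)] by (simp add: orthogonal_def)
        hence "(norm (hW + hp))\<^sup>2 = (norm hW)\<^sup>2 + (norm hp)\<^sup>2" by (rule norm_add_Pythagorean)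
        hence "(norm hW)\<^sup>2 \<le> (norm (hW + hp))\<^sup>2" by simp
        hence "norm hW \<le> norm (hW + hp)" by (rule power2_le_imp_le) simp
        hence "dist xW y \<le> dist x y'" using h(3) by (simp add: xW_def dist_norm)
        hence "dist xW y < r" using dx r by (simp add: r'_def)
        moreover have "\<forall>a\<in>J. aff a xW > 0" using xa affeq JW by simp
        ultimately have "aff b xW \<noteq> 0" using P[OF xWW _ _ bS] by blast
        thus ?thesis using affeq[OF bW] by simp
      qed
    qed
  qed
  define e where "e = (\<Sum>a\<in>J. d a)"
  have de: "fst a' \<bullet> e = 1" if "a' \<in> J" for a'
  proof -
    have "fst a' \<bullet> e = (\<Sum>a\<in>J. fst a' \<bullet> d a)" by (simp add: e_def inner_sum_right)
    also have "\<dots> = (\<Sum>a\<in>J. if a = a' then 1 else 0)"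
      by (rule sum.cong) (use that dJ in auto)
    also have "\<dots> = 1" using finJ that by simp
    finally show ?thesis .
  qed
  obtain t0 where t0: "t0 > 0" "t0 * norm e < r'" using small_step[OF r'0] by blast
  define x0 where "x0 = y' + t0 *\<^sub>R e"
  have x0O: "x0 \<in> Ob"
  proof -
    have "dist x0 y' = t0 * norm e" using t0 by (simp add: x0_def dist_norm)
    moreover have "aff a x0 > 0" if "a \<in> J" for a
      using y'J[OF that] de[OF that] t0 by (simp add: x0_def aff_def inner_add_right algebra_simps)
    ultimately show ?thesis using Oiff t0 by simp
  qed
  define Hs where "Hs = UNIV - (\<Union>a\<in>Phi. hyp UNIV a)"
  have OHs: "Ob \<subseteq> Hs" using Oav by (auto simp: Hs_def hyp_def)
  define Cf where "Cf = connected_component_set Hs x0"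
  have CfA: "Cf \<in> alcoves UNIV Phi"
    unfolding Cf_def alcoves_def Hs_def[symmetric] by (rule componentsI) (use x0O OHs in blast)
  have OCf: "Ob \<subseteq> Cf" unfolding Cf_def
    by (rule connected_component_maximal[OF x0O convex_connected[OF Oconv] OHs])
  have CfH: "Cf \<subseteq> Hs" unfolding Cf_def by (rule connected_component_subset)
  have Cfconn: "connected Cf" unfolding Cf_def by (rule connected_connected_component)
  have "J \<subseteq> basis_of_alcove UNIV Phi Cf"
  proof
    fix a assume a: "a \<in> J"
    have aP: "a \<in> Phi" using a JP by blast
    have half: "(1/2) *\<^sub>R a \<notin> Phi"
    proof
      assume h: "(1/2) *\<^sub>R a \<in> Phi"
      have "fst ((1/2) *\<^sub>R a) \<in> W" using JW[OF a] subW by (simp add: subspace_scale)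
      hence "(1/2) *\<^sub>R a \<in> SJ" using h by (simp add: SJ_def)
      thus False using Jhalf[OF a] by blast
    qed
    have x0Cf: "x0 \<in> Cf" using x0O OCf by blast
    have ax0: "aff a x0 > 0" using x0O Oiff a by blast
    have pos: "\<forall>x\<in>Cf. aff a x > 0"
    proof (rule ccontr)
      assume "\<not> (\<forall>x\<in>Cf. aff a x > 0)"
      then obtain x where x: "x \<in> Cf" "aff a x \<le> 0" by force
      have "\<exists>z\<in>Cf. fst a \<bullet> z = - snd a"
        by (rule connected_ivt_hyperplane[OF Cfconn x(1) x0Cf]) (use x ax0 in \<open>auto simp: aff_def\<close>)
      then obtain z where z: "z \<in> Cf" "aff a z = 0" by (auto simp: aff_def)
      have "z \<in> Hs" using z(1) CfH by blast
      thus False using z(2) aP by (auto simp: Hs_def hyp_def)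
    qed
    define Ha where "Ha = hyp UNIV a"
    have Ha_eq: "Ha = {x. fst a \<bullet> x = - snd a}" by (auto simp: Ha_def hyp_def aff_def)
    have affHa: "affine Ha" unfolding Ha_eq by (rule affine_hyperplane)
    define T where "T = ball y' r' \<inter> (\<Inter>a'\<in>J - {a}. {x. aff a' x > 0})"
    have Tiff: "x \<in> T \<longleftrightarrow> dist x y' < r' \<and> (\<forall>a'\<in>J - {a}. aff a' x > 0)" for x
      unfolding T_def by (simp add: dist_commute)
    have Topen: "open T" unfolding T_def
    proof (rule open_Int[OF open_ball open_INT])
      show "finite (J - {a})" using finJ by simp
      show "\<forall>a'\<in>J - {a}. open {x. aff a' x > 0}"
        unfolding aff_def by (intro ballI open_Collect_less continuous_intros)
    qed
    obtain t1 where t1: "t1 > 0" "t1 * norm (e - d a) < r'" using small_step[OF r'0] by blast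
    define x1 where "x1 = y' + t1 *\<^sub>R (e - d a)"
    have x1H: "x1 \<in> Ha"
      using y'J[OF a] de[OF a] dJ[OF a a] by (simp add: Ha_def hyp_def x1_def aff_def inner_add_right inner_diff_right algebra_simps)
    have x1T: "x1 \<in> T"
    proof -
      have "dist x1 y' = t1 * norm (e - d a)" using t1 by (simp add: x1_def dist_norm)
      moreover have "aff a' x1 > 0" if "a' \<in> J - {a}" for a'
      proof -
        have "fst a' \<bullet> d a = 0" using dJ[OF a, of a'] that by simp
        thus ?thesis using y'J[of a'] de[of a'] that t1
          by (simp add: x1_def aff_def inner_add_right inner_diff_right algebra_simps)
      qed
      ultimately show ?thesis using Tiff t1 by simp
    qed
    have HTO: "Ha \<inter> T \<subseteq> closure Ob"
    proof
      fix x assume x: "x \<in> Ha \<inter> T"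
      have ax: "aff a x = 0" using x by (simp add: Ha_def hyp_def)
      have xT: "dist x y' < r'" "\<forall>a'\<in>J - {a}. aff a' x > 0" using x Tiff by auto
      show "x \<in> closure Ob"
        unfolding closure_approachable
      proof (intro allI impI)
        fix e2 :: real assume e2: "e2 > 0"
        have "0 < min e2 (r' - dist x y')" using e2 xT by simp
        then obtain s where s: "s > 0" "s * norm (d a) < min e2 (r' - dist x y')"
          using small_step by blast
        define o' where "o' = x + s *\<^sub>R d a"
        have do': "dist o' x = s * norm (d a)" using s by (simp add: o'_def dist_norm)
        have "dist o' y' \<le> dist o' x + dist x y'" by (rule dist_triangle)
        hence "dist o' y' < r'" using do' s by simp
        moreover have "aff a' o' > 0" if a': "a' \<in> J" for a'
        proof (cases "a' = a")
          case True
          thus ?thesis using ax dJ[OF a a] s by (simp add: o'_def aff_def inner_add_right algebra_simps)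
        next
          case False
          have "fst a' \<bullet> d a = 0" using dJ[OF a a'] False by simp
          moreover have "aff a' x > 0" using xT a' False by blast
          ultimately show ?thesis by (simp add: o'_def aff_def inner_add_right algebra_simps)
        qed
        ultimately have "o' \<in> Ob" using Oiff by blast
        moreover have "dist o' x < e2" using do' s by simp
        ultimately show "\<exists>z\<in>Ob. dist z x < e2" by blast
      qed
    qed
    have "closure Ob \<subseteq> closure Cf" by (rule closure_mono[OF OCf])
    hence HTsub: "Ha \<inter> T \<subseteq> Ha \<inter> closure Cf" using HTO by blast
    have "Ha = affine hull Ha" using affHa by (metis hull_same)
    also have "\<dots> = affine hull (Ha \<inter> T)"
      using affine_hull_convex_Int_open[OF affine_imp_convex[OF affHa] Topen] x1H x1T by blast
    also have "\<dots> \<subseteq> affine hull (Ha \<inter> closure Cf)" by (rule hull_mono[OF HTsub])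
    finally have "Ha \<subseteq> affine hull (Ha \<inter> closure Cf)" .
    moreover have "affine hull (Ha \<inter> closure Cf) \<subseteq> Ha"
      by (rule hull_minimal[of _ _ affine]) (use affHa in auto)
    ultimately have "is_wall UNIV a Cf" by (simp add: is_wall_def Ha_def)
    thus "a \<in> basis_of_alcove UNIV Phi Cf"
      using aP half pos by (simp add: basis_of_alcove_def)
  qed
  thus ?thesis using CfA unfolding is_basis_def by blast
qed

end


theorem lemmaA2:
  fixes Phi J :: "'v::euclidean_space afun set"
  assumes "affine_root_system UNIV Phi"
    and "J \<subseteq> Phi"
    and "inj_on grad J" and "independent (grad ` J)"
    and "is_basis (sub_space J) (sub_system Phi J) BJ"
    and "J \<subseteq> BJ"
  shows "\<exists>B'. is_basis UNIV Phi B' \<and> J \<subseteq> B'"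
proof -
  obtain CJ where CJ: "CJ \<in> alcoves (sub_space J) (sub_system Phi J)"
    "BJ = basis_of_alcove (sub_space J) (sub_system Phi J) CJ"
    using assms(5) unfolding is_basis_def by blast
  obtain d where d: "\<forall>a\<in>J. d a \<in> span (grad ` J)"
    "\<forall>a\<in>J. \<forall>a'\<in>J. fst a' \<bullet> d a = (if a' = a then 1 else 0)"
    using dual_exists[OF assms(3) assms(4)] by blast
  have finJ: "finite J" using finiteI_independent[OF assms(4)] assms(3) finite_imageD by blast
  define y where "y = - (\<Sum>a\<in>J. snd a *\<^sub>R d a)"
  have yW: "y \<in> span (grad ` J)" unfolding y_def
    by (intro span_neg span_sum span_mul) (use d(1) in blast)
  have yJ: "aff a' y = 0" if a': "a' \<in> J" for a'
  proof -
    have "fst a' \<bullet> y = - (\<Sum>a\<in>J. snd a * (fst a' \<bullet> d a))"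
      by (simp add: y_def inner_sum_right)
    also have "(\<Sum>a\<in>J. snd a * (fst a' \<bullet> d a)) = (\<Sum>a\<in>J. if a = a' then snd a else 0)"
      by (rule sum.cong) (use d(2) a' in auto)
    also have "\<dots> = snd a'" using finJ a' by simp
    finally show ?thesis by (simp add: aff_def)
  qed
  have SJeq: "sub_system Phi J = {a\<in>Phi. fst a \<in> span (grad ` J)}"
    by (simp add: sub_system_def grad_def)
  have Jb: "J \<subseteq> basis_of_alcove (span (grad ` J)) (sub_system Phi J) CJ"
    using assms(6) CJ(2) by (simp add: sub_space_def)
  interpret setJ Phi J CJ "span (grad ` J)" "sub_system Phi J" y d
  proof
    show "affine_root_system UNIV Phi" by (rule assms(1))
    show "J \<subseteq> Phi" by (rule assms(2))
    show "inj_on grad J" by (rule assms(3))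
    show "independent (grad ` J)" by (rule assms(4))
    show "span (grad ` J) = span (grad ` J)" ..
    show "sub_system Phi J = {a\<in>Phi. fst a \<in> span (grad ` J)}" by (rule SJeq)
    show "CJ \<in> components (span (grad ` J) - (\<Union>a\<in>sub_system Phi J. hyp (span (grad ` J)) a))"
      using CJ(1) by (simp add: alcoves_def sub_space_def)
    show "\<And>a. a \<in> J \<Longrightarrow> is_wall (span (grad ` J)) a CJ"
      using Jb by (auto simp: basis_of_alcove_def)
    show "\<And>a x. a \<in> J \<Longrightarrow> x \<in> CJ \<Longrightarrow> 0 < aff a x"
      using Jb by (auto simp: basis_of_alcove_def)
    show "y \<in> span (grad ` J)" by (rule yW)
    show "\<And>a. a \<in> J \<Longrightarrow> aff a y = 0" by (rule yJ)
    show "\<And>a. a \<in> J \<Longrightarrow> d a \<in> span (grad ` J)" using d(1) by blast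
    show "\<And>a a'. a \<in> J \<Longrightarrow> a' \<in> J \<Longrightarrow> fst a' \<bullet> d a = (if a' = a then 1 else 0)"
      using d(2) by blast
  qed
  have "\<And>a. a \<in> J \<Longrightarrow> (1/2) *\<^sub>R a \<notin> sub_system Phi J"
    using Jb by (auto simp: basis_of_alcove_def)
  thus ?thesis by (rule final)
qed


end
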